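(* Let $A$ be a complex $3$-dimensional binary associative superalgebra of type $(2,1)$. Then either $A$ is associative, or $A$ is isomorphic to $\mathbf{R}_{28}$ or to $\mathbf{R}_{30}$.
   Context: All algebras are over $\mathbb{C}$. A superalgebra is a $\mathbb{Z}_2$-graded algebra $A=A_0\oplus A_1$ with $A_iA_j\subseteq A_{i+j \bmod 2}$; $|x|\in\{0,1\}$ is the degree of a homogeneous $x$. It has type $(n,m)$ if $\dim A_0=n$, $\dim A_1=m$. Isomorphisms are grading-preserving algebra isomorphisms. The associator is $(x,y,z)=(xy)z-x(yz)$; a superalgebra is associative if $(x,y,z)=0$ for all $x,y,z$. A binary associative superalgebra is a superalgebra satisfying $(x,y,z)=-(-1)^{|y||z|}(x,z,y)=-(-1)^{|x||y|}(y,x,z)$ for all homogeneous $x,y,z$. Superalgebras of type $(2,1)$, in basis $e_1,e_2$ (even), $f_1$ (odd), listed by nonzero products (unlisted products are zero): $\mathbf{R}_{28}$: $e_1e_1=e_1,\ e_2e_1=e_2,\ e_1f_1=f_1,\ f_1f_1=e_2$; $\mathbf{R}_{30}$: $e_1e_1=e_1,\ e_1e_2=e_2,\ f_1e_1=f_1,\ f_1f_1=e_2$. *)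

theory Defs
  imports Complex_Main
begin

text \<open>A superalgebra of type (2,1) over the complex numbers, presented in a homogeneous
basis: basis index 0 = e1, 1 = e2 (even), 2 = f1 (odd).  Elements are coordinate
vectors nat => complex whose coordinates outside {0,1,2} vanish; the algebra is given by
structure constants c i j k (the coefficient of basis vector k in the product of basis
vectors i and j).\<close>

type_synonym vec3 = "nat \<Rightarrow> complex"
type_synonym sconst = "nat \<Rightarrow> nat \<Rightarrow> nat \<Rightarrow> complex"

definition is_vec :: "vec3 \<Rightarrow> bool" where
  "is_vec x \<longleftrightarrow> (\<forall>k\<ge>3. x k = 0)"

definition bdeg :: "nat \<Rightarrow> nat" where
  "bdeg i = (if i = 2 then 1 else 0)"

definition smul :: "sconst \<Rightarrow> vec3 \<Rightarrow> vec3 \<Rightarrow> vec3" where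
  "smul c x y = (\<lambda>k. if k < 3 then (\<Sum>i<3. \<Sum>j<3. x i * y j * c i j k) else 0)"

definition is_superalg :: "sconst \<Rightarrow> bool" where
  "is_superalg c \<longleftrightarrow> (\<forall>i<3. \<forall>j<3. \<forall>k<3.
      bdeg k \<noteq> (bdeg i + bdeg j) mod 2 \<longrightarrow> c i j k = 0)"

definition homog :: "nat \<Rightarrow> vec3 \<Rightarrow> bool" where
  "homog d x \<longleftrightarrow> is_vec x \<and> d < 2 \<and> (\<forall>k<3. bdeg k \<noteq> d \<longrightarrow> x k = 0)"

definition assoc3 :: "sconst \<Rightarrow> vec3 \<Rightarrow> vec3 \<Rightarrow> vec3 \<Rightarrow> vec3" where
  "assoc3 c x y z = (\<lambda>k. smul c (smul c x y) z k - smul c x (smul c y z) k)"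

definition is_assoc :: "sconst \<Rightarrow> bool" where
  "is_assoc c \<longleftrightarrow> (\<forall>x y z. is_vec x \<and> is_vec y \<and> is_vec z \<longrightarrow> assoc3 c x y z = (\<lambda>_. 0))"

definition is_binary_assoc :: "sconst \<Rightarrow> bool" where
  "is_binary_assoc c \<longleftrightarrow> (\<forall>a b d x y z. homog a x \<and> homog b y \<and> homog d z \<longrightarrow>
      assoc3 c x y z = (\<lambda>k. - ((-1) ^ (b * d)) * assoc3 c x z y k) \<and>
      assoc3 c x y z = (\<lambda>k. - ((-1) ^ (a * b)) * assoc3 c y x z k))"

definition mat_app :: "(nat \<Rightarrow> nat \<Rightarrow> complex) \<Rightarrow> vec3 \<Rightarrow> vec3" where
  "mat_app P x = (\<lambda>k. if k < 3 then (\<Sum>i<3. P k i * x i) else 0)"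

definition mat_mult3 :: "(nat \<Rightarrow> nat \<Rightarrow> complex) \<Rightarrow> (nat \<Rightarrow> nat \<Rightarrow> complex) \<Rightarrow> nat \<Rightarrow> nat \<Rightarrow> complex" where
  "mat_mult3 P Q = (\<lambda>i j. \<Sum>l<3. P i l * Q l j)"

definition invertible3 :: "(nat \<Rightarrow> nat \<Rightarrow> complex) \<Rightarrow> bool" where
  "invertible3 P \<longleftrightarrow> (\<exists>Q. \<forall>i<3. \<forall>j<3.
      mat_mult3 P Q i j = (if i = j then 1 else 0) \<and> mat_mult3 Q P i j = (if i = j then 1 else 0))"

definition super_iso :: "sconst \<Rightarrow> sconst \<Rightarrow> bool" where
  "super_iso c c' \<longleftrightarrow> (\<exists>P. invertible3 P \<and>
      (\<forall>i<3. \<forall>k<3. bdeg i \<noteq> bdeg k \<longrightarrow> P k i = 0) \<and>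
      (\<forall>x y. is_vec x \<and> is_vec y \<longrightarrow> mat_app P (smul c x y) = smul c' (mat_app P x) (mat_app P y)))"

definition R28 :: sconst where
  "R28 i j k = (if (i,j,k) = (0,0,0) \<or> (i,j,k) = (1,0,1) \<or> (i,j,k) = (0,2,2) \<or> (i,j,k) = (2,2,1)
                then 1 else 0)"

definition R30 :: sconst where
  "R30 i j k = (if (i,j,k) = (0,0,0) \<or> (i,j,k) = (0,1,1) \<or> (i,j,k) = (2,0,2) \<or> (i,j,k) = (2,2,1)
                then 1 else 0)"

end

theory Submission
  imports Defs
begin

lemma sum3: "(\<Sum>i<(3::nat). f i) = f 0 + f 1 + f 2"
  by (simp add: eval_nat_numeral)

definition Aso :: "sconst \<Rightarrow> nat \<Rightarrow> nat \<Rightarrow> nat \<Rightarrow> nat \<Rightarrow> complex" where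
  "Aso c i j l k = (\<Sum>m<3. c i j m * c m l k - c j l m * c i m k)"

lemma assoc3_exp: "k < 3 \<Longrightarrow> assoc3 c x y z k = (\<Sum>i<3. \<Sum>j<3. \<Sum>l<3. x i * y j * z l * Aso c i j l k)"
  unfolding assoc3_def smul_def Aso_def sum3
  by (simp add: algebra_simps)

definition ev :: "nat \<Rightarrow> vec3" where "ev i = (\<lambda>k. if k = i then 1 else 0)"

lemma assoc3_ev: "i < 3 \<Longrightarrow> j < 3 \<Longrightarrow> l < 3 \<Longrightarrow> k < 3 \<Longrightarrow>
   assoc3 c (ev i) (ev j) (ev l) k = Aso c i j l k"
  apply (subst assoc3_exp, assumption)
  unfolding sum3 ev_def
  by (auto simp: less_Suc_eq eval_nat_numeral)

lemma homog_ev: "i < 3 \<Longrightarrow> homog (bdeg i) (ev i)"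
  unfolding homog_def is_vec_def ev_def bdeg_def by auto

lemma zeros:
  assumes "is_superalg c"
  shows "c 0 0 2 = 0" "c 0 1 2 = 0" "c 1 0 2 = 0" "c 1 1 2 = 0"
    "c 0 2 0 = 0" "c 0 2 1 = 0" "c 1 2 0 = 0" "c 1 2 1 = 0"
    "c 2 0 0 = 0" "c 2 0 1 = 0" "c 2 1 0 = 0" "c 2 1 1 = 0" "c 2 2 2 = 0"
proof -
  have H: "\<And>i j k. i<3 \<Longrightarrow> j<3 \<Longrightarrow> k<3 \<Longrightarrow> bdeg k \<noteq> (bdeg i + bdeg j) mod 2 \<Longrightarrow> c i j k = 0"
    using assms unfolding is_superalg_def by blast
  show "c 0 0 2 = 0" "c 0 1 2 = 0" "c 1 0 2 = 0" "c 1 1 2 = 0"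
    "c 0 2 0 = 0" "c 0 2 1 = 0" "c 1 2 0 = 0" "c 1 2 1 = 0"
    "c 2 0 0 = 0" "c 2 0 1 = 0" "c 2 1 0 = 0" "c 2 1 1 = 0" "c 2 2 2 = 0"
    by (rule H; simp add: bdeg_def)+
qed

lemma rels:
  assumes "is_binary_assoc c" "i < 3" "j < 3" "l < 3" "k < 3"
  shows "Aso c i j l k = - ((-1) ^ (bdeg j * bdeg l)) * Aso c i l j k"
    "Aso c i j l k = - ((-1) ^ (bdeg i * bdeg j)) * Aso c j i l k"
proof -
  have "assoc3 c (ev i) (ev j) (ev l) = (\<lambda>k. - ((-1) ^ (bdeg j * bdeg l)) * assoc3 c (ev i) (ev l) (ev j) k) \<and>
      assoc3 c (ev i) (ev j) (ev l) = (\<lambda>k. - ((-1) ^ (bdeg i * bdeg j)) * assoc3 c (ev j) (ev i) (ev l) k)"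
    using assms(1) homog_ev[OF assms(2)] homog_ev[OF assms(3)] homog_ev[OF assms(4)]
    unfolding is_binary_assoc_def by blast
  then show "Aso c i j l k = - ((-1) ^ (bdeg j * bdeg l)) * Aso c i l j k"
    "Aso c i j l k = - ((-1) ^ (bdeg i * bdeg j)) * Aso c j i l k"
    using assoc3_ev assms by metis+
qed

lemma is_assoc_I:
  assumes "\<And>i j l k. i<3 \<Longrightarrow> j<3 \<Longrightarrow> l<3 \<Longrightarrow> k<3 \<Longrightarrow> Aso c i j l k = 0"
  shows "is_assoc c"
  unfolding is_assoc_def
proof (intro allI impI ext)
  fix x y z k
  show "assoc3 c x y z k = 0"
  proof (cases "k < 3")
    case True
    then show ?thesis using assms by (simp add: assoc3_exp)
  next
    case False
    then show ?thesis by (simp add: assoc3_def smul_def)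
  qed
qed

lemma less2: "(i::nat) < 2 \<longleftrightarrow> i = 0 \<or> i = 1" by auto
lemma less3: "(i::nat) < 3 \<longleftrightarrow> i = 0 \<or> i = 1 \<or> i = 2" by auto

context
  fixes c :: sconst
  assumes sa: "is_superalg c" and ba: "is_binary_assoc c"
begin

lemma bd0: "i < 2 \<Longrightarrow> bdeg i = 0" by (simp add: bdeg_def)
lemma bd2: "bdeg 2 = 1" by (simp add: bdeg_def)

lemma Eass: "i < 2 \<Longrightarrow> j < 2 \<Longrightarrow> l < 2 \<Longrightarrow> k < 3 \<Longrightarrow> Aso c i j l k = 0"
proof -
  assume a: "i < 2" "j < 2" "l < 2" "k < 3"
  have r1: "Aso c i j l k = - Aso c i l j k" if "i<2" "j<2" "l<2" for i j l
  proof -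
    have "Aso c i j l k = - ((-1) ^ (bdeg j * bdeg l)) * Aso c i l j k"
      by (rule rels(1)[OF ba]) (use that a(4) in auto)
    then show ?thesis using that by (simp add: bd0)
  qed
  have r2: "Aso c i j l k = - Aso c j i l k" if "i<2" "j<2" "l<2" for i j l
  proof -
    have "Aso c i j l k = - ((-1) ^ (bdeg i * bdeg j)) * Aso c j i l k"
      by (rule rels(2)[OF ba]) (use that a(4) in auto)
    then show ?thesis using that by (simp add: bd0)
  qed
  show ?thesis
  proof (cases "j = l")
    case True then show ?thesis using r1[OF a(1-3)] by simp
  next
    case False
    show ?thesis
    proof (cases "i = j")
      case True then show ?thesis using r2[OF a(1-3)] by simp
    next
      case False
      then have "i = l" using \<open>j \<noteq> l\<close> a by auto
      then show ?thesis using r1[OF a(1-3)] r2[of i i j] a by simp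
    qed
  qed
qed

lemma Aso_i2j2: "i < 2 \<Longrightarrow> j < 2 \<Longrightarrow> Aso c i 2 j 2 = 0"
  using zeros[OF sa] by (auto simp: less2 Aso_def sum3)

lemma Aso_ij22: "i < 2 \<Longrightarrow> j < 2 \<Longrightarrow> Aso c i j 2 2 = 0"
proof -
  assume a: "i < 2" "j < 2"
  then have b: "i < 3" "j < 3" "(2::nat) < 3" by auto
  have "Aso c i j 2 2 = - Aso c i 2 j 2" using rels(1)[OF ba b(1) b(2) b(3) b(3)] a by (simp add: bd0 bd2)
  then show ?thesis using Aso_i2j2 a by simp
qed

lemma Aso_2ij2: "i < 2 \<Longrightarrow> j < 2 \<Longrightarrow> Aso c 2 i j 2 = 0"
proof -
  assume a: "i < 2" "j < 2"
  then have b: "i < 3" "j < 3" "(2::nat) < 3" by auto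
  have "Aso c 2 i j 2 = - Aso c i 2 j 2" using rels(2)[OF ba b(3) b(1) b(2) b(3)] a by (simp add: bd0 bd2)
  then show ?thesis using Aso_i2j2 a by simp
qed

lemma Aso_two1: "i < 2 \<Longrightarrow> k < 3 \<Longrightarrow> Aso c i 2 2 k = - Aso c 2 i 2 k"
proof -
  assume a: "i < 2" "k < 3"
  then have b: "i < 3" "(2::nat) < 3" by auto
  show ?thesis using rels(2)[OF ba b(1) b(2) b(2) a(2)] a by (simp add: bd0 bd2)
qed

lemma Aso_two2: "i < 2 \<Longrightarrow> k < 3 \<Longrightarrow> Aso c 2 i 2 k = - Aso c 2 2 i k"
proof -
  assume a: "i < 2" "k < 3"
  then have b: "i < 3" "(2::nat) < 3" by auto
  show ?thesis using rels(1)[OF ba b(2) b(1) b(2) a(2)] a by (simp add: bd0 bd2)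
qed

lemma E_b: "i < 2 \<Longrightarrow> j < 2 \<Longrightarrow> c i j 0 * c 0 2 2 + c i j 1 * c 1 2 2 = c i 2 2 * c j 2 2"
  using Aso_ij22[of i j] zeros[OF sa] by (auto simp: less2 Aso_def sum3 algebra_simps)

lemma E_g: "i < 2 \<Longrightarrow> j < 2 \<Longrightarrow> c i j 0 * c 2 0 2 + c i j 1 * c 2 1 2 = c 2 i 2 * c 2 j 2"
  using Aso_2ij2[of i j] zeros[OF sa] by (auto simp: less2 Aso_def sum3 algebra_simps)

lemma E_xD: "i < 2 \<Longrightarrow> k < 2 \<Longrightarrow> c 2 2 0 * c i 0 k + c 2 2 1 * c i 1 k = c 2 i 2 * c 2 2 k"
  using Aso_two1[of i k] zeros[OF sa] by (auto simp: less2 Aso_def sum3 algebra_simps)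

lemma E_Dx: "i < 2 \<Longrightarrow> k < 2 \<Longrightarrow> c 2 2 0 * c 0 i k + c 2 2 1 * c 1 i k = c i 2 2 * c 2 2 k"
  using Aso_two2[of i k] zeros[OF sa] by (auto simp: less2 Aso_def sum3 algebra_simps)

lemma E_ass: "i < 2 \<Longrightarrow> j < 2 \<Longrightarrow> l < 2 \<Longrightarrow> k < 2 \<Longrightarrow>
   c i j 0 * c 0 l k + c i j 1 * c 1 l k = c j l 0 * c i 0 k + c j l 1 * c i 1 k"
  using Eass[of i j l k] zeros[OF sa] by (auto simp: less2 Aso_def sum3 algebra_simps)

end

context
  fixes c :: sconst
  assumes sa: "is_superalg c" and ba: "is_binary_assoc c"
begin

lemma V2: "i < 2 \<Longrightarrow> k < 2 \<Longrightarrow> Aso c 2 i 2 k = (c 2 i 2 - c i 2 2) * c 2 2 k"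
  using zeros[OF sa] by (auto simp: less2 Aso_def sum3 algebra_simps)

lemma V3: "Aso c 2 2 2 2 = c 2 2 0 * c 0 2 2 + c 2 2 1 * c 1 2 2 - c 2 2 0 * c 2 0 2 - c 2 2 1 * c 2 1 2"
  using zeros[OF sa] by (auto simp: Aso_def sum3 algebra_simps)

lemma assoc_case:
  assumes h: "(c 2 2 0 = 0 \<and> c 2 2 1 = 0) \<or> (c 0 2 2 = c 2 0 2 \<and> c 1 2 2 = c 2 1 2)"
  shows "is_assoc c"
proof (rule is_assoc_I)
  have Z2: "Aso c 2 i 2 k = 0" if "i<2" "k<2" for i k
    using h that by (auto simp: V2 less2)
  have Z1: "Aso c i 2 2 k = 0" if "i<2" "k<2" for i k
    using Z2[OF that] Aso_two1[OF sa ba, of i k] that by simp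
  have Z3: "Aso c 2 2 i k = 0" if "i<2" "k<2" for i k
    using Z2[OF that] Aso_two2[OF sa ba, of i k] that by simp
  have Z4: "Aso c 2 2 2 2 = 0" using h V3 by auto
  fix i j l k :: nat
  assume "i<3" "j<3" "l<3" "k<3"
  then show "Aso c i j l k = 0"
    apply (simp only: less3)
    apply (elim disjE)
    apply (simp_all add: Z1 Z2 Z3 Z4 Eass[OF sa ba] Aso_i2j2[OF sa ba] Aso_ij22[OF sa ba] Aso_2ij2[OF sa ba])
    apply (simp_all only: Aso_def sum3)
    apply (simp_all add: zeros[OF sa] zeros[OF sa, unfolded One_nat_def])
    done
qed

end

lemma core:
  fixes a :: "nat\<Rightarrow>nat\<Rightarrow>nat\<Rightarrow>complex" and b d :: "nat \<Rightarrow> complex"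
  assumes F1: "a 0 0 0 * b 0 + a 0 0 1 * b 1 = b 0 * b 0"
    and F2: "\<And>i k. i<2 \<Longrightarrow> k<2 \<Longrightarrow> d 0 * a i 0 k + d 1 * a i 1 k = 0"
    and F3: "\<And>i k. i<2 \<Longrightarrow> k<2 \<Longrightarrow> d 0 * a 0 i k + d 1 * a 1 i k = b i * d k"
    and F4: "a 0 0 0 * a 0 0 1 + a 0 0 1 * a 1 0 1 = a 0 0 0 * a 0 0 1 + a 0 0 1 * a 0 1 1"
    and bd: "b 0 * d 0 + b 1 * d 1 = 0"
    and b0: "b 0 \<noteq> 0" and dn: "d 0 \<noteq> 0 \<or> d 1 \<noteq> 0"
  shows "a 0 0 0 = b 0 \<and> a 0 0 1 = 0 \<and> a 0 1 0 = b 1 \<and> a 0 1 1 = 0 \<and>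
         a 1 0 0 = 0 \<and> a 1 0 1 = b 0 \<and> a 1 1 0 = 0 \<and> a 1 1 1 = b 1"
proof -
  have d1: "d 1 \<noteq> 0"
  proof
    assume "d 1 = 0"
    then have "b 0 * d 0 = 0" using bd by simp
    then show False using b0 dn \<open>d 1 = 0\<close> by simp
  qed
  have G2: "b 0 * a i 1 k = b 1 * a i 0 k" if "i<2" "k<2" for i k
  proof -
    have "d 1 * (b 0 * a i 1 k - b 1 * a i 0 k) = - a i 0 k * (b 0 * d 0 + b 1 * d 1)"
      using F2[OF that] by (simp add: algebra_simps) (metis add_diff_cancel_left' mult.left_commute diff_0 mult_minus_right)
    then have "d 1 * (b 0 * a i 1 k - b 1 * a i 0 k) = 0" using bd by simp
    then show ?thesis using d1 by simp
  qed
  have G3: "d 1 * (b 0 * a 1 i k - b 1 * a 0 i k) = b 0 * b i * d k" if "i<2" "k<2" for i k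
  proof -
    have "d 1 * (b 0 * a 1 i k - b 1 * a 0 i k) = b 0 * (d 0 * a 0 i k + d 1 * a 1 i k) - a 0 i k * (b 0 * d 0 + b 1 * d 1)"
      by (simp add: algebra_simps)
    then show ?thesis using F3[OF that] bd by simp
  qed
  have "b 0 * d 1 * (a 1 0 1 - a 0 1 1) = d 1 * (b 0 * a 1 0 1 - b 1 * a 0 0 1) - d 1 * (b 0 * a 0 1 1 - b 1 * a 0 0 1)"
    by (simp add: algebra_simps)
  also have "\<dots> = b 0 * b 0 * d 1" using G3[of 0 1] G2[of 0 1] by simp
  finally have "a 1 0 1 - a 0 1 1 = b 0" using b0 d1
    by (metis (no_types, lifting) mult.commute mult_cancel_left mult.assoc)
  then have a001: "a 0 0 1 = 0" using F4 b0
    by (metis add_left_cancel eq_iff_diff_eq_0 mult_eq_0_iff right_diff_distrib)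
  have a000: "a 0 0 0 = b 0" using F1 a001 b0 by simp
  have a01: "a 0 1 0 = b 1" "a 0 1 1 = 0" using G2[of 0 0] G2[of 0 1] a000 a001 b0
    by (simp_all add: mult.commute)
  have "d 1 * (b 0 * a 1 0 0 - b 1 * b 0) = b 0 * b 0 * d 0" using G3[of 0 0] a000 by simp
  then have "b 0 * (d 1 * a 1 0 0) = b 0 * (b 1 * d 1 + b 0 * d 0)" by (simp add: algebra_simps)
  then have "b 0 * (d 1 * a 1 0 0) = 0" using bd by (metis add.commute mult_zero_right)
  then have a100: "a 1 0 0 = 0" using b0 d1 by simp
  have "d 1 * (b 0 * a 1 0 1) = d 1 * (b 0 * b 0)" using G3[of 0 1] a001 by (simp add: algebra_simps)
  then have a101: "a 1 0 1 = b 0" using b0 d1 by simp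
  have a11: "a 1 1 0 = 0" "a 1 1 1 = b 1" using G2[of 1 0] G2[of 1 1] a100 a101 b0
    by (simp_all add: mult.commute)
  show ?thesis using a000 a001 a01 a100 a101 a11 by simp
qed

context
  fixes c :: sconst
  assumes sa: "is_superalg c" and ba: "is_binary_assoc c"
begin

lemma nonassoc_split:
  assumes dn: "c 2 2 0 \<noteq> 0 \<or> c 2 2 1 \<noteq> 0"
    and bg: "c 0 2 2 \<noteq> c 2 0 2 \<or> c 1 2 2 \<noteq> c 2 1 2"
  shows "(c 2 0 2 = 0 \<and> c 2 1 2 = 0 \<and> (c 0 2 2 \<noteq> 0 \<or> c 1 2 2 \<noteq> 0) \<and> c 0 2 2 * c 2 2 0 + c 1 2 2 * c 2 2 1 = 0)
       \<or> (c 0 2 2 = 0 \<and> c 1 2 2 = 0 \<and> (c 2 0 2 \<noteq> 0 \<or> c 2 1 2 \<noteq> 0) \<and> c 2 0 2 * c 2 2 0 + c 2 1 2 * c 2 2 1 = 0)"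
proof -
  define b0 b1 g0 g1 d0 d1 where "b0 = c 0 2 2" "b1 = c 1 2 2" "g0 = c 2 0 2" "g1 = c 2 1 2"
    "d0 = c 2 2 0" "d1 = c 2 2 1"
  have Eb00: "c 0 0 0 * b0 + c 0 0 1 * b1 = b0 * b0" using E_b[OF sa ba, of 0 0] by (simp add: b0_b1_g0_g1_d0_d1_def)
  have Eb01: "c 0 1 0 * b0 + c 0 1 1 * b1 = b0 * b1" using E_b[OF sa ba, of 0 1] by (simp add: b0_b1_g0_g1_d0_d1_def)
  have Eb10: "c 1 0 0 * b0 + c 1 0 1 * b1 = b1 * b0" using E_b[OF sa ba, of 1 0] by (simp add: b0_b1_g0_g1_d0_d1_def)
  have Eb11: "c 1 1 0 * b0 + c 1 1 1 * b1 = b1 * b1" using E_b[OF sa ba, of 1 1] by (simp add: b0_b1_g0_g1_d0_d1_def)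
  have Eg00: "c 0 0 0 * g0 + c 0 0 1 * g1 = g0 * g0" using E_g[OF sa ba, of 0 0] by (simp add: b0_b1_g0_g1_d0_d1_def)
  have Eg01: "c 0 1 0 * g0 + c 0 1 1 * g1 = g0 * g1" using E_g[OF sa ba, of 0 1] by (simp add: b0_b1_g0_g1_d0_d1_def)
  have Eg10: "c 1 0 0 * g0 + c 1 0 1 * g1 = g1 * g0" using E_g[OF sa ba, of 1 0] by (simp add: b0_b1_g0_g1_d0_d1_def)
  have Eg11: "c 1 1 0 * g0 + c 1 1 1 * g1 = g1 * g1" using E_g[OF sa ba, of 1 1] by (simp add: b0_b1_g0_g1_d0_d1_def)
  have X00: "d0 * c 0 0 0 + d1 * c 0 1 0 = g0 * d0" using E_xD[OF sa ba, of 0 0] by (simp add: b0_b1_g0_g1_d0_d1_def)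
  have X01: "d0 * c 0 0 1 + d1 * c 0 1 1 = g0 * d1" using E_xD[OF sa ba, of 0 1] by (simp add: b0_b1_g0_g1_d0_d1_def)
  have X10: "d0 * c 1 0 0 + d1 * c 1 1 0 = g1 * d0" using E_xD[OF sa ba, of 1 0] by (simp add: b0_b1_g0_g1_d0_d1_def)
  have X11: "d0 * c 1 0 1 + d1 * c 1 1 1 = g1 * d1" using E_xD[OF sa ba, of 1 1] by (simp add: b0_b1_g0_g1_d0_d1_def)
  have Y00: "d0 * c 0 0 0 + d1 * c 1 0 0 = b0 * d0" using E_Dx[OF sa ba, of 0 0] by (simp add: b0_b1_g0_g1_d0_d1_def)
  have Y01: "d0 * c 0 0 1 + d1 * c 1 0 1 = b0 * d1" using E_Dx[OF sa ba, of 0 1] by (simp add: b0_b1_g0_g1_d0_d1_def)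
  have Y10: "d0 * c 0 1 0 + d1 * c 1 1 0 = b1 * d0" using E_Dx[OF sa ba, of 1 0] by (simp add: b0_b1_g0_g1_d0_d1_def)
  have Y11: "d0 * c 0 1 1 + d1 * c 1 1 1 = b1 * d1" using E_Dx[OF sa ba, of 1 1] by (simp add: b0_b1_g0_g1_d0_d1_def)
  have bD0: "(b0 - g0) * (b0 * d0 + b1 * d1) = 0" using Eb00 Eb01 X00 X01 by algebra
  have bD1: "(b1 - g1) * (b0 * d0 + b1 * d1) = 0" using Eb10 Eb11 X10 X11 by algebra
  have gD0: "(g0 - b0) * (g0 * d0 + g1 * d1) = 0" using Eg00 Eg10 Y00 Y01 by algebra
  have gD1: "(g1 - b1) * (g0 * d0 + g1 * d1) = 0" using Eg01 Eg11 Y10 Y11 by algebra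
  have bdz: "b0 * d0 + b1 * d1 = 0" using bD0 bD1 bg unfolding b0_b1_g0_g1_d0_d1_def by auto
  have gdz: "g0 * d0 + g1 * d1 = 0" using gD0 gD1 bg unfolding b0_b1_g0_g1_d0_d1_def by auto
  have w0: "d0 * (b0 * g1 - b1 * g0) = 0" using bdz gdz by algebra
  have w1: "d1 * (b0 * g1 - b1 * g0) = 0" using bdz gdz by algebra
  have w: "b0 * g1 = b1 * g0" using w0 w1 dn unfolding b0_b1_g0_g1_d0_d1_def by auto
  have bgn: "b0 \<noteq> g0 \<or> b1 \<noteq> g1" using bg unfolding b0_b1_g0_g1_d0_d1_def by auto
  have main: "(g0 = 0 \<and> g1 = 0) \<or> (b0 = 0 \<and> b1 = 0)"
  proof (rule ccontr)
    assume nz: "\<not> ((g0 = 0 \<and> g1 = 0) \<or> (b0 = 0 \<and> b1 = 0))"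
    show False
    proof (cases "g0 \<noteq> 0")
      case True
      have "b0 * (b0 - g0) * g0 = 0" using Eb00 Eg00 w by algebra
      then have "b0 = 0 \<or> b0 = g0" using True by simp
      then show False
      proof
        assume "b0 = 0" then have "b1 = 0" using w True by simp
        then show False using nz \<open>b0 = 0\<close> by simp
      next
        assume "b0 = g0" then have "b1 = g1" using w True by (simp add: mult.commute)
        then show False using bgn \<open>b0 = g0\<close> by simp
      qed
    next
      case False
      then have g1: "g1 \<noteq> 0" using nz by auto
      have "b1 * (b1 - g1) * g1 = 0" using Eb11 Eg11 w by algebra
      then have "b1 = 0 \<or> b1 = g1" using g1 by simp
      then show False
      proof
        assume "b1 = 0" then have "b0 = 0" using w g1 by simp
        then show False using nz \<open>b1 = 0\<close> by simp
      next
        assume "b1 = g1" then have "b0 = g0" using w g1 by (simp add: mult.commute)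
        then show False using bgn \<open>b1 = g1\<close> by simp
      qed
    qed
  qed
  show ?thesis using main bdz gdz bgn unfolding b0_b1_g0_g1_d0_d1_def by (auto simp: mult.commute)
qed

end

lemma sum3': "(\<Sum>i<(3::nat). f i) = f 0 + f 1 + f 2"
  by (simp add: eval_nat_numeral)

definition C28 :: "(nat \<Rightarrow> complex) \<Rightarrow> (nat \<Rightarrow> complex) \<Rightarrow> sconst" where
  "C28 b d i j k = (if i<2 \<and> j<2 \<and> k<2 then (if i = k then b j else 0)
     else if i<2 \<and> j=2 \<and> k=2 then b i else if i=2 \<and> j=2 \<and> k<2 then d k else 0)"

definition C30 :: "(nat \<Rightarrow> complex) \<Rightarrow> (nat \<Rightarrow> complex) \<Rightarrow> sconst" where
  "C30 g d i j k = (if i<2 \<and> j<2 \<and> k<2 then (if j = k then g i else 0)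
     else if i=2 \<and> j<2 \<and> k=2 then g j else if i=2 \<and> j=2 \<and> k<2 then d k else 0)"

definition PM :: "(nat \<Rightarrow> complex) \<Rightarrow> complex \<Rightarrow> complex \<Rightarrow> complex \<Rightarrow> nat \<Rightarrow> nat \<Rightarrow> complex" where
  "PM b m0 m1 s k i = (if k = 0 \<and> i < 2 then b i else if k = 1 \<and> i = 0 then m0
     else if k = 1 \<and> i = 1 then m1 else if k = 2 \<and> i = 2 then s else 0)"

lemma smul_cong: "(\<And>i j k. i<3 \<Longrightarrow> j<3 \<Longrightarrow> k<3 \<Longrightarrow> c i j k = c' i j k) \<Longrightarrow> smul c = smul c'"
  unfolding smul_def by (intro ext) (simp add: sum3')

lemma hom28:
  assumes bd: "b 0 * d 0 + b 1 * d 1 = 0" and md: "m0 * d 0 + m1 * d 1 = s * s"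
  shows "mat_app (PM b m0 m1 s) (smul (C28 b d) x y) = smul R28 (mat_app (PM b m0 m1 s) x) (mat_app (PM b m0 m1 s) y)"
proof (rule ext)
  fix k :: nat
  show "mat_app (PM b m0 m1 s) (smul (C28 b d) x y) k = smul R28 (mat_app (PM b m0 m1 s) x) (mat_app (PM b m0 m1 s) y) k"
  proof (cases "k < 3")
    case False then show ?thesis by (simp add: mat_app_def smul_def)
  next
    case True
    then consider "k = 0" | "k = 1" | "k = 2" by linarith
    then show ?thesis
    proof cases
      case 1 show ?thesis unfolding 1 mat_app_def smul_def sum3'
        by (simp add: PM_def C28_def R28_def) (use bd[unfolded One_nat_def] in algebra)
    next
      case 2 show ?thesis unfolding 2 mat_app_def smul_def sum3'
        by (simp add: PM_def C28_def R28_def) (use md[unfolded One_nat_def] in algebra)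
    next
      case 3 show ?thesis unfolding 3 mat_app_def smul_def sum3'
        by (simp add: PM_def C28_def R28_def algebra_simps)
    qed
  qed
qed

lemma hom30:
  assumes bd: "b 0 * d 0 + b 1 * d 1 = 0" and md: "m0 * d 0 + m1 * d 1 = s * s"
  shows "mat_app (PM b m0 m1 s) (smul (C30 b d) x y) = smul R30 (mat_app (PM b m0 m1 s) x) (mat_app (PM b m0 m1 s) y)"
proof (rule ext)
  fix k :: nat
  show "mat_app (PM b m0 m1 s) (smul (C30 b d) x y) k = smul R30 (mat_app (PM b m0 m1 s) x) (mat_app (PM b m0 m1 s) y) k"
  proof (cases "k < 3")
    case False then show ?thesis by (simp add: mat_app_def smul_def)
  next
    case True
    then consider "k = 0" | "k = 1" | "k = 2" by linarith
    then show ?thesis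
    proof cases
      case 1 show ?thesis unfolding 1 mat_app_def smul_def sum3'
        by (simp add: PM_def C30_def R30_def) (use bd[unfolded One_nat_def] in algebra)
    next
      case 2 show ?thesis unfolding 2 mat_app_def smul_def sum3'
        by (simp add: PM_def C30_def R30_def) (use md[unfolded One_nat_def] in algebra)
    next
      case 3 show ?thesis unfolding 3 mat_app_def smul_def sum3'
        by (simp add: PM_def C30_def R30_def algebra_simps)
    qed
  qed
qed

lemma PM_grade: "\<forall>i<3. \<forall>k<3. bdeg i \<noteq> bdeg k \<longrightarrow> PM b m0 m1 s k i = 0"
  by (auto simp: PM_def bdeg_def less3)

lemma PM_inv1:
  assumes "d0 \<noteq> 0" "b 1 \<noteq> 0"
  shows "invertible3 (PM b d0 0 d0)"
  unfolding invertible3_def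
  apply (rule exI[of _ "\<lambda>k i. if k = 0 \<and> i = 1 then 1 / d0 else if k = 1 \<and> i = 0 then 1 / b 1
     else if k = 1 \<and> i = 1 then - b 0 / (b 1 * d0) else if k = 2 \<and> i = 2 then 1 / d0 else 0"])
  using assms by (auto simp: less3 mat_mult3_def sum3' PM_def field_simps)

lemma PM_inv2:
  assumes "d1 \<noteq> 0" "b 0 \<noteq> 0" "b 1 = 0"
  shows "invertible3 (PM b 0 d1 d1)"
  unfolding invertible3_def
  apply (rule exI[of _ "\<lambda>k i. if k = 0 \<and> i = 0 then 1 / b 0 else if k = 1 \<and> i = 1 then 1 / d1
     else if k = 2 \<and> i = 2 then 1 / d1 else 0"])
  using assms by (auto simp: less3 mat_mult3_def sum3' PM_def field_simps)

lemma iso28: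
  assumes agree: "\<And>i j k. i<3 \<Longrightarrow> j<3 \<Longrightarrow> k<3 \<Longrightarrow> c i j k = C28 b d i j k"
    and bd: "b 0 * d 0 + b 1 * d 1 = 0" and bn: "b 0 \<noteq> 0 \<or> b 1 \<noteq> 0" and dn: "d 0 \<noteq> 0 \<or> d 1 \<noteq> 0"
  shows "super_iso c R28"
proof -
  have sc: "smul c = smul (C28 b d)" by (rule smul_cong) (use agree in auto)
  show ?thesis
  proof (cases "d 0 = 0")
    case False
    have "b 1 \<noteq> 0" using bd bn False by auto
    then have "invertible3 (PM b (d 0) 0 (d 0))" using PM_inv1[OF False] by blast
    moreover have md: "d 0 * d 0 + 0 * d 1 = d 0 * d 0" by simp
    ultimately show ?thesis unfolding super_iso_def sc
      using PM_grade hom28[OF bd md] by blast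
  next
    case True
    then have d1: "d 1 \<noteq> 0" using dn by simp
    then have b1: "b 1 = 0" using bd True by simp
    then have b0: "b 0 \<noteq> 0" using bn by simp
    have "invertible3 (PM b 0 (d 1) (d 1))" using PM_inv2[OF d1 b0 b1] by blast
    moreover have md: "0 * d 0 + d 1 * d 1 = d 1 * d 1" using True by simp
    ultimately show ?thesis unfolding super_iso_def sc
      using PM_grade hom28[OF bd md] by blast
  qed
qed

lemma iso30:
  assumes agree: "\<And>i j k. i<3 \<Longrightarrow> j<3 \<Longrightarrow> k<3 \<Longrightarrow> c i j k = C30 b d i j k"
    and bd: "b 0 * d 0 + b 1 * d 1 = 0" and bn: "b 0 \<noteq> 0 \<or> b 1 \<noteq> 0" and dn: "d 0 \<noteq> 0 \<or> d 1 \<noteq> 0"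
  shows "super_iso c R30"
proof -
  have sc: "smul c = smul (C30 b d)" by (rule smul_cong) (use agree in auto)
  show ?thesis
  proof (cases "d 0 = 0")
    case False
    have "b 1 \<noteq> 0" using bd bn False by auto
    then have "invertible3 (PM b (d 0) 0 (d 0))" using PM_inv1[OF False] by blast
    moreover have md: "d 0 * d 0 + 0 * d 1 = d 0 * d 0" by simp
    ultimately show ?thesis unfolding super_iso_def sc
      using PM_grade hom30[OF bd md] by blast
  next
    case True
    then have d1: "d 1 \<noteq> 0" using dn by simp
    then have b1: "b 1 = 0" using bd True by simp
    then have b0: "b 0 \<noteq> 0" using bn by simp
    have "invertible3 (PM b 0 (d 1) (d 1))" using PM_inv2[OF d1 b0 b1] by blast
    moreover have md: "0 * d 0 + d 1 * d 1 = d 1 * d 1" using True by simp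
    ultimately show ?thesis unfolding super_iso_def sc
      using PM_grade hom30[OF bd md] by blast
  qed
qed

context
  fixes c :: sconst
  assumes sa: "is_superalg c" and ba: "is_binary_assoc c"
begin

lemma facts:
  "c 0 0 0 * c 0 2 2 + c 0 0 1 * c 1 2 2 = c 0 2 2 * c 0 2 2"
  "c 1 1 0 * c 0 2 2 + c 1 1 1 * c 1 2 2 = c 1 2 2 * c 1 2 2"
  "c 0 0 0 * c 2 0 2 + c 0 0 1 * c 2 1 2 = c 2 0 2 * c 2 0 2"
  "c 1 1 0 * c 2 0 2 + c 1 1 1 * c 2 1 2 = c 2 1 2 * c 2 1 2"
  "c 2 2 0 * c 0 0 0 + c 2 2 1 * c 0 1 0 = c 2 0 2 * c 2 2 0"
  "c 2 2 0 * c 0 0 1 + c 2 2 1 * c 0 1 1 = c 2 0 2 * c 2 2 1"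
  "c 2 2 0 * c 1 0 0 + c 2 2 1 * c 1 1 0 = c 2 1 2 * c 2 2 0"
  "c 2 2 0 * c 1 0 1 + c 2 2 1 * c 1 1 1 = c 2 1 2 * c 2 2 1"
  "c 2 2 0 * c 0 0 0 + c 2 2 1 * c 1 0 0 = c 0 2 2 * c 2 2 0"
  "c 2 2 0 * c 0 0 1 + c 2 2 1 * c 1 0 1 = c 0 2 2 * c 2 2 1"
  "c 2 2 0 * c 0 1 0 + c 2 2 1 * c 1 1 0 = c 1 2 2 * c 2 2 0"
  "c 2 2 0 * c 0 1 1 + c 2 2 1 * c 1 1 1 = c 1 2 2 * c 2 2 1"
  "c 0 0 0 * c 0 0 1 + c 0 0 1 * c 1 0 1 = c 0 0 0 * c 0 0 1 + c 0 0 1 * c 0 1 1"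
  "c 1 1 0 * c 0 1 0 + c 1 1 1 * c 1 1 0 = c 1 1 0 * c 1 0 0 + c 1 1 1 * c 1 1 0"
  using E_b[OF sa ba, of 0 0] E_b[OF sa ba, of 1 1] E_g[OF sa ba, of 0 0] E_g[OF sa ba, of 1 1]
    E_xD[OF sa ba, of 0 0] E_xD[OF sa ba, of 0 1] E_xD[OF sa ba, of 1 0] E_xD[OF sa ba, of 1 1]
    E_Dx[OF sa ba, of 0 0] E_Dx[OF sa ba, of 0 1] E_Dx[OF sa ba, of 1 0] E_Dx[OF sa ba, of 1 1]
    E_ass[OF sa ba, of 0 0 0 1] E_ass[OF sa ba, of 1 1 1 0]
  by simp_all

lemmas factsS = facts[unfolded One_nat_def] facts(13,14)[symmetric, unfolded One_nat_def]
lemma nat11: "(1::nat) - 1 = 0" by simp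

lemmas factsAC = factsS[simplified ac_simps]

lemma struct28:
  assumes g: "c 2 0 2 = 0" "c 2 1 2 = 0" and bn: "c 0 2 2 \<noteq> 0 \<or> c 1 2 2 \<noteq> 0"
    and bd: "c 0 2 2 * c 2 2 0 + c 1 2 2 * c 2 2 1 = 0" and dn: "c 2 2 0 \<noteq> 0 \<or> c 2 2 1 \<noteq> 0"
  shows "c 0 0 0 = c 0 2 2 \<and> c 0 0 1 = 0 \<and> c 0 1 0 = c 1 2 2 \<and> c 0 1 1 = 0 \<and>
         c 1 0 0 = 0 \<and> c 1 0 1 = c 0 2 2 \<and> c 1 1 0 = 0 \<and> c 1 1 1 = c 1 2 2"
proof (cases "c 0 2 2 = 0")
  note gS = g[unfolded One_nat_def]
  case False
  define a where "a = (\<lambda>i j k. c i j k)"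
  define b where "b = (\<lambda>i. c i 2 2)"
  define d where "d = (\<lambda>k. c 2 2 k)"
  have "a 0 0 0 = b 0 \<and> a 0 0 1 = 0 \<and> a 0 1 0 = b 1 \<and> a 0 1 1 = 0 \<and>
         a 1 0 0 = 0 \<and> a 1 0 1 = b 0 \<and> a 1 1 0 = 0 \<and> a 1 1 1 = b 1"
    apply (rule core[of a b d])
          apply (unfold a_def b_def d_def)
          apply ((simp only: diff_zero nat11)?; (use facts factsS in algebra))
         apply ((simp only: less2); elim disjE; clarify; (simp only: diff_zero nat11)?; (use facts factsS g gS in algebra))
        apply ((simp only: less2); elim disjE; clarify; (simp only: diff_zero nat11)?; (use facts factsS g gS in algebra))
       apply ((simp only: diff_zero nat11)?; (use facts factsS in algebra))
      apply ((simp only: diff_zero nat11)?; (metis bd add.commute))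
    using False dn by auto
  then show ?thesis by (simp add: a_def b_def d_def)
next
  note gS = g[unfolded One_nat_def]
  case True
  define a where "a = (\<lambda>i j k. c (1-i) (1-j) (1-k))"
  define b where "b = (\<lambda>i. c (1-i) 2 2)"
  define d where "d = (\<lambda>k. c 2 2 (1-k))"
  have "a 0 0 0 = b 0 \<and> a 0 0 1 = 0 \<and> a 0 1 0 = b 1 \<and> a 0 1 1 = 0 \<and>
         a 1 0 0 = 0 \<and> a 1 0 1 = b 0 \<and> a 1 1 0 = 0 \<and> a 1 1 1 = b 1"
    apply (rule core[of a b d])
          apply (unfold a_def b_def d_def)
          apply ((simp only: diff_zero nat11)?; (use facts factsS in algebra))
         apply ((simp only: less2); elim disjE; clarify; (simp only: diff_zero nat11)?; (use facts factsS g gS in algebra))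
        apply ((simp only: less2); elim disjE; clarify; (simp only: diff_zero nat11)?; (use facts factsS g gS in algebra))
       apply ((simp only: diff_zero nat11)?; (use facts factsS in algebra))
      apply ((simp only: diff_zero nat11)?; (metis bd add.commute))
    using True bn dn by auto
  then show ?thesis by (simp add: a_def b_def d_def)
qed

lemma struct30:
  assumes g: "c 0 2 2 = 0" "c 1 2 2 = 0" and bn: "c 2 0 2 \<noteq> 0 \<or> c 2 1 2 \<noteq> 0"
    and bd: "c 2 0 2 * c 2 2 0 + c 2 1 2 * c 2 2 1 = 0" and dn: "c 2 2 0 \<noteq> 0 \<or> c 2 2 1 \<noteq> 0"
  shows "c 0 0 0 = c 2 0 2 \<and> c 0 0 1 = 0 \<and> c 1 0 0 = c 2 1 2 \<and> c 1 0 1 = 0 \<and>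
         c 0 1 0 = 0 \<and> c 0 1 1 = c 2 0 2 \<and> c 1 1 0 = 0 \<and> c 1 1 1 = c 2 1 2"
proof (cases "c 2 0 2 = 0")
  note gS = g[unfolded One_nat_def]
  case False
  define a where "a = (\<lambda>i j k. c j i k)"
  define b where "b = (\<lambda>i. c 2 i 2)"
  define d where "d = (\<lambda>k. c 2 2 k)"
  have "a 0 0 0 = b 0 \<and> a 0 0 1 = 0 \<and> a 0 1 0 = b 1 \<and> a 0 1 1 = 0 \<and>
         a 1 0 0 = 0 \<and> a 1 0 1 = b 0 \<and> a 1 1 0 = 0 \<and> a 1 1 1 = b 1"
    apply (rule core[of a b d])
          apply (unfold a_def b_def d_def)
          apply ((simp only: diff_zero nat11)?; (use facts factsS in algebra))
         apply ((simp only: less2); elim disjE; clarify; (simp only: diff_zero nat11)?; (use facts factsS g gS in algebra))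
        apply ((simp only: less2); elim disjE; clarify; (simp only: diff_zero nat11)?; (use facts factsS g gS in algebra))
       apply ((simp only: diff_zero nat11)?; (use facts factsS in algebra))
      apply ((simp only: diff_zero nat11)?; (metis bd add.commute))
    using False dn by auto
  then show ?thesis by (simp add: a_def b_def d_def)
next
  note gS = g[unfolded One_nat_def]
  case True
  define a where "a = (\<lambda>i j k. c (1-j) (1-i) (1-k))"
  define b where "b = (\<lambda>i. c 2 (1-i) 2)"
  define d where "d = (\<lambda>k. c 2 2 (1-k))"
  have "a 0 0 0 = b 0 \<and> a 0 0 1 = 0 \<and> a 0 1 0 = b 1 \<and> a 0 1 1 = 0 \<and>
         a 1 0 0 = 0 \<and> a 1 0 1 = b 0 \<and> a 1 1 0 = 0 \<and> a 1 1 1 = b 1"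
    apply (rule core[of a b d])
          apply (unfold a_def b_def d_def)
          apply ((simp only: diff_zero nat11)?; (use facts factsS in algebra))
         apply ((simp only: less2); elim disjE; clarify; (simp only: diff_zero nat11)?; (use facts factsS g gS in algebra))
        apply ((simp only: less2); elim disjE; clarify; (simp only: diff_zero nat11)?; (use facts factsS g gS in algebra))
       apply ((simp only: diff_zero nat11)?; (use facts factsS in algebra))
      apply ((simp only: diff_zero nat11)?; (metis bd add.commute))
    using True bn dn by auto
  then show ?thesis by (simp add: a_def b_def d_def)
qed

end

theorem mainTheorem20:
  fixes c :: sconst
  assumes "is_superalg c" and "is_binary_assoc c"
  shows "is_assoc c \<or> super_iso c R28 \<or> super_iso c R30"
proof (cases "(c 2 2 0 = 0 \<and> c 2 2 1 = 0) \<or> (c 0 2 2 = c 2 0 2 \<and> c 1 2 2 = c 2 1 2)")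
  case True
  then show ?thesis using assoc_case[OF assms] by blast
next
  case False
  then have dn: "c 2 2 0 \<noteq> 0 \<or> c 2 2 1 \<noteq> 0" and bg: "c 0 2 2 \<noteq> c 2 0 2 \<or> c 1 2 2 \<noteq> c 2 1 2"
    by auto
  note Z = zeros[OF assms(1)]
  note ZS = Z[unfolded One_nat_def]
  from nonassoc_split[OF assms dn bg] show ?thesis
  proof
    assume h: "c 2 0 2 = 0 \<and> c 2 1 2 = 0 \<and> (c 0 2 2 \<noteq> 0 \<or> c 1 2 2 \<noteq> 0) \<and> c 0 2 2 * c 2 2 0 + c 1 2 2 * c 2 2 1 = 0"
    then have g: "c 2 0 2 = 0" "c 2 1 2 = 0" and bn: "c 0 2 2 \<noteq> 0 \<or> c 1 2 2 \<noteq> 0"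
      and bd: "c 0 2 2 * c 2 2 0 + c 1 2 2 * c 2 2 1 = 0" by auto
    note S = struct28[OF assms g bn bd dn]
    have S1: "c 0 0 0 = c 0 2 2" "c 0 0 1 = 0" "c 0 1 0 = c 1 2 2" "c 0 1 1 = 0"
         "c 1 0 0 = 0" "c 1 0 1 = c 0 2 2" "c 1 1 0 = 0" "c 1 1 1 = c 1 2 2" using S by auto
    note S1S = S1[unfolded One_nat_def]
    note gS = g[unfolded One_nat_def]
    have agree: "c i j k = C28 (\<lambda>i. c i 2 2) (\<lambda>k. c 2 2 k) i j k" if "i<3" "j<3" "k<3" for i j k
      using that unfolding less3
      by (elim disjE; clarify; simp add: C28_def Z ZS S1 S1S g gS)
    have "super_iso c R28"
      by (rule iso28[OF agree]) (use bd bn dn in auto)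
    then show ?thesis by blast
  next
    assume h: "c 0 2 2 = 0 \<and> c 1 2 2 = 0 \<and> (c 2 0 2 \<noteq> 0 \<or> c 2 1 2 \<noteq> 0) \<and> c 2 0 2 * c 2 2 0 + c 2 1 2 * c 2 2 1 = 0"
    then have g: "c 0 2 2 = 0" "c 1 2 2 = 0" and bn: "c 2 0 2 \<noteq> 0 \<or> c 2 1 2 \<noteq> 0"
      and bd: "c 2 0 2 * c 2 2 0 + c 2 1 2 * c 2 2 1 = 0" by auto
    note S = struct30[OF assms g bn bd dn]
    have S1: "c 0 0 0 = c 2 0 2" "c 0 0 1 = 0" "c 1 0 0 = c 2 1 2" "c 1 0 1 = 0"
         "c 0 1 0 = 0" "c 0 1 1 = c 2 0 2" "c 1 1 0 = 0" "c 1 1 1 = c 2 1 2" using S by auto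
    note S1S = S1[unfolded One_nat_def]
    note gS = g[unfolded One_nat_def]
    have agree: "c i j k = C30 (\<lambda>i. c 2 i 2) (\<lambda>k. c 2 2 k) i j k" if "i<3" "j<3" "k<3" for i j k
      using that unfolding less3
      by (elim disjE; clarify; simp add: C30_def Z ZS S1 S1S g gS)
    have "super_iso c R30"
      by (rule iso30[OF agree]) (use bd bn dn in auto)
    then show ?thesis by blast
  qed
qed


end
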